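(* Let $A$ be a finite set of options and let $\mathcal{L}$ be the set of all Llull matrices on $A$, viewed as a subset of a finite-dimensional real space. For $v\in\mathcal{L}$ let $T(v)\subseteq A$ be the set of path-top choices of $v$. Then $T$ is upper semicontinuous on $\mathcal{L}$: every $v\in\mathcal{L}$ has a neighbourhood $U$ such that $T(w)\subseteq T(v)$ for every $w\in U\cap\mathcal{L}$.
   Context: A Llull matrix on $A$ is a family of real numbers $v_{xy}\in[0,1]$, indexed by ordered pairs $(x,y)$ of distinct elements of $A$, with $v_{xy}+v_{yx}\le1$. Path scores: $v^*_{xy}=\max\min(v_{x_0x_1},\dots,v_{x_{m-1}x_m})$ over all paths $x_0\dots x_m$ ($m\ge1$, $x_0=x$, $x_m=y$, $x_i$ pairwise distinct). Ranking relation: $x\succeq y$ iff there is a path $x_0\dots x_m$ from $x$ to $y$ with $v^*_{x_ix_{i+1}}\ge v^*_{x_{i+1}x_i}$ for all $i<m$. An option $x$ is a path-top choice of $v$ if $x\succeq y$ for all $y\ne x$. *)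

theory Defs
  imports "HOL-Analysis.Analysis"
begin

text \<open>A Llull matrix on A is represented by a function v :: 'a => 'a => real;
  only the values v x y for distinct x, y in A are meaningful.\<close>

definition llull :: "'a set \<Rightarrow> ('a \<Rightarrow> 'a \<Rightarrow> real) \<Rightarrow> bool" where
  "llull A v \<longleftrightarrow> (\<forall>x\<in>A. \<forall>y\<in>A. x \<noteq> y \<longrightarrow>
      0 \<le> v x y \<and> v x y \<le> 1 \<and> v x y + v y x \<le> 1)"

definition is_path :: "'a set \<Rightarrow> 'a \<Rightarrow> 'a \<Rightarrow> 'a list \<Rightarrow> bool" where
  "is_path A x y xs \<longleftrightarrow> length xs \<ge> 2 \<and> distinct xs \<and> set xs \<subseteq> A
      \<and> hd xs = x \<and> last xs = y"

definition path_min :: "('a \<Rightarrow> 'a \<Rightarrow> real) \<Rightarrow> 'a list \<Rightarrow> real" where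
  "path_min v xs = Min (set (map (\<lambda>(a, b). v a b) (zip xs (tl xs))))"

definition path_score :: "'a set \<Rightarrow> ('a \<Rightarrow> 'a \<Rightarrow> real) \<Rightarrow> 'a \<Rightarrow> 'a \<Rightarrow> real" where
  "path_score A v x y = Max {path_min v xs | xs. is_path A x y xs}"

definition ranks :: "'a set \<Rightarrow> ('a \<Rightarrow> 'a \<Rightarrow> real) \<Rightarrow> 'a \<Rightarrow> 'a \<Rightarrow> bool" where
  "ranks A v x y \<longleftrightarrow> (\<exists>xs. is_path A x y xs \<and>
      (\<forall>i < length xs - 1. path_score A v (xs ! i) (xs ! Suc i)
                            \<ge> path_score A v (xs ! Suc i) (xs ! i)))"

definition path_top :: "'a set \<Rightarrow> ('a \<Rightarrow> 'a \<Rightarrow> real) \<Rightarrow> 'a set" where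
  "path_top A v = {x \<in> A. \<forall>y\<in>A. y \<noteq> x \<longrightarrow> ranks A v x y}"

end

theory Submission
  imports Defs
begin

lemma min_close:
  fixes f g :: "'b \<Rightarrow> real"
  assumes "finite S" "S \<noteq> {}" "\<And>s. s \<in> S \<Longrightarrow> \<bar>f s - g s\<bar> < e"
  shows "\<bar>Min (f ` S) - Min (g ` S)\<bar> < e"
proof -
  have "Min (f ` S) \<in> f ` S" using assms by (intro Min_in) auto
  then obtain s0 where s0: "s0 \<in> S" "f s0 = Min (f ` S)" by auto
  have "Min (g ` S) \<in> g ` S" using assms by (intro Min_in) auto
  then obtain s1 where s1: "s1 \<in> S" "g s1 = Min (g ` S)" by auto
  have "Min (g ` S) \<le> g s0" using assms s0 by auto
  moreover have "Min (f ` S) \<le> f s1" using assms s1 by auto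
  ultimately show ?thesis using assms(3)[OF s0(1)] assms(3)[OF s1(1)] s0 s1 by auto
qed

lemma max_close:
  fixes f g :: "'b \<Rightarrow> real"
  assumes "finite S" "S \<noteq> {}" "\<And>s. s \<in> S \<Longrightarrow> \<bar>f s - g s\<bar> < e"
  shows "\<bar>Max (f ` S) - Max (g ` S)\<bar> < e"
proof -
  have "Max (f ` S) \<in> f ` S" using assms by (intro Max_in) auto
  then obtain s0 where s0: "s0 \<in> S" "f s0 = Max (f ` S)" by auto
  have "Max (g ` S) \<in> g ` S" using assms by (intro Max_in) auto
  then obtain s1 where s1: "s1 \<in> S" "g s1 = Max (g ` S)" by auto
  have "Max (g ` S) \<ge> g s0" using assms s0 by auto
  moreover have "Max (f ` S) \<ge> f s1" using assms s1 by auto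
  ultimately show ?thesis using assms(3)[OF s0(1)] assms(3)[OF s1(1)] s0 s1 by auto
qed

lemma path_min_close:
  assumes "is_path A x y xs"
    and cl: "\<forall>a\<in>A. \<forall>b\<in>A. a \<noteq> b \<longrightarrow> \<bar>w a b - v a b\<bar> < e"
  shows "\<bar>path_min w xs - path_min v xs\<bar> < e"
proof -
  let ?S = "set (zip xs (tl xs))"
  have ne: "?S \<noteq> {}" using assms(1) unfolding is_path_def
    by (cases xs; cases "tl xs"; auto)
  have "\<bar>(\<lambda>(a,b). w a b) p - (\<lambda>(a,b). v a b) p\<bar> < e" if hp: "p \<in> ?S" for p
  proof -
    obtain i where i: "i < length (zip xs (tl xs))" "p = zip xs (tl xs) ! i"
      using hp[unfolded in_set_conv_nth] by blast
    have p: "p = (xs ! i, xs ! Suc i)" using i by (simp add: nth_tl)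
    have "Suc i < length xs" using i by simp
    moreover have "xs ! i \<noteq> xs ! Suc i" using assms(1) calculation
      unfolding is_path_def by (simp add: nth_eq_iff_index_eq)
    moreover have "xs ! i \<in> A" "xs ! Suc i \<in> A" using assms(1) calculation
      unfolding is_path_def by (auto dest: nth_mem)
    ultimately show ?thesis using cl p by auto
  qed
  then show ?thesis unfolding path_min_def set_map
    by (intro min_close) (use ne in auto)
qed

lemma path_score_close:
  assumes "finite A" "x \<in> A" "y \<in> A" "x \<noteq> y"
    and cl: "\<forall>a\<in>A. \<forall>b\<in>A. a \<noteq> b \<longrightarrow> \<bar>w a b - v a b\<bar> < e"
  shows "\<bar>path_score A w x y - path_score A v x y\<bar> < e"
proof -
  let ?P = "{xs. is_path A x y xs}"
  have fin: "finite ?P"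
    by (rule finite_subset[OF _ finite_subset_distinct[OF assms(1)]])
       (auto simp: is_path_def)
  have "is_path A x y [x, y]" using assms by (auto simp: is_path_def)
  then have ne: "?P \<noteq> {}" by blast
  have eq: "\<And>u. {path_min u xs | xs. is_path A x y xs} = (\<lambda>xs. path_min u xs) ` ?P"
    by auto
  show ?thesis unfolding path_score_def eq
    by (rule max_close[OF fin ne]) (use path_min_close[OF _ cl] in auto)
qed

theorem proposition2p4:
  fixes A :: "'a set" and v :: "'a \<Rightarrow> 'a \<Rightarrow> real"
  assumes "finite A" and "llull A v"
  shows "\<exists>\<epsilon>>0. \<forall>w. llull A w \<and>
           (\<forall>x\<in>A. \<forall>y\<in>A. x \<noteq> y \<longrightarrow> \<bar>w x y - v x y\<bar> < \<epsilon>)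
           \<longrightarrow> path_top A w \<subseteq> path_top A v"
proof -
  define gap where "gap = (\<lambda>(a,b). if path_score A v a b < path_score A v b a
      then (path_score A v b a - path_score A v a b) / 2 else (1::real))"
  define e where "e = Min (insert 1 (gap ` (A \<times> A)))"
  have fin: "finite (insert 1 (gap ` (A \<times> A)))" using assms(1) by auto
  have epos: "e > 0" unfolding e_def
    using fin by (subst Min_gr_iff) (auto simp: gap_def)
  have ele: "e \<le> gap (a, b)" if "a \<in> A" "b \<in> A" for a b
    unfolding e_def using fin that by (intro Min_le) auto
  show ?thesis
  proof (intro exI[of _ e] conjI allI impI epos)
    fix w assume "llull A w \<and> (\<forall>x\<in>A. \<forall>y\<in>A. x \<noteq> y \<longrightarrow> \<bar>w x y - v x y\<bar> < e)"
    then have cl: "\<forall>x\<in>A. \<forall>y\<in>A. x \<noteq> y \<longrightarrow> \<bar>w x y - v x y\<bar> < e" by blast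
    have key: "path_score A v a b \<ge> path_score A v b a"
      if "a \<in> A" "b \<in> A" "a \<noteq> b" "path_score A w a b \<ge> path_score A w b a" for a b
    proof (rule ccontr)
      assume nl: "\<not> ?thesis"
      then have "e \<le> (path_score A v b a - path_score A v a b) / 2"
        using ele[OF that(1,2)] by (simp add: gap_def)
      moreover have "\<bar>path_score A w a b - path_score A v a b\<bar> < e"
        using path_score_close[OF assms(1) that(1-3) cl] .
      moreover have "\<bar>path_score A w b a - path_score A v b a\<bar> < e"
        using path_score_close[OF assms(1) that(2,1) _ cl] that(3) by auto
      ultimately show False using that(4) unfolding abs_less_iff by (simp add: field_simps)
    qed
    have rk: "ranks A v x y" if hr: "ranks A w x y" for x y
    proof -
      obtain xs where xs: "is_path A x y xs" and
        st: "\<forall>i < length xs - 1. path_score A w (xs ! i) (xs ! Suc i)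
                            \<ge> path_score A w (xs ! Suc i) (xs ! i)"
        using hr unfolding ranks_def by blast
      have "path_score A v (xs ! i) (xs ! Suc i) \<ge> path_score A v (xs ! Suc i) (xs ! i)"
        if i: "i < length xs - 1" for i
      proof (rule key)
        have "Suc i < length xs" using i by simp
        then show "xs ! i \<noteq> xs ! Suc i" "xs ! i \<in> A" "xs ! Suc i \<in> A"
          using xs unfolding is_path_def by (auto simp: nth_eq_iff_index_eq dest: nth_mem)
        show "path_score A w (xs ! i) (xs ! Suc i) \<ge> path_score A w (xs ! Suc i) (xs ! i)"
          using st i by blast
      qed
      then show ?thesis unfolding ranks_def using xs by blast
    qed
    show "path_top A w \<subseteq> path_top A v"
      unfolding path_top_def using rk by blast
  qed
qed

end
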